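(* For every concurrent game structure $G$, every $F\subseteq S$ and every $\varepsilon>0$, there exist $k>0$ and a $k$-uniform player-1 selector $\xi$ such that the memoryless strategy $\overline{\xi}$ is $\varepsilon$-optimal for $\mathrm{Safe}(F)$, i.e. $\inf_{\pi_2}\Pr_s^{\overline{\xi},\pi_2}(\mathrm{Safe}(F))\ge\mathrm{val}_1(\mathrm{Safe}(F))(s)-\varepsilon$ for all $s\in S$.
   Context: Concurrent game structure $G=(S,M,\Gamma_1,\Gamma_2,\delta)$: finite states $S$, finite moves $M$, nonempty move sets $\Gamma_i(s)\subseteq M$, $\delta(s,a_1,a_2)\in\mathrm{Distr}(S)$ (simultaneous independent moves). A selector for player 1 assigns to each state $s$ a distribution on $\Gamma_1(s)$; $\overline{\xi}$ is the memoryless strategy playing $\xi$ forever. Strategies map histories to distributions on available moves; $\Pr_s^{\pi_1,\pi_2}$ is the induced measure on plays from $s$. $\mathrm{Safe}(F)$: plays staying in $F$ forever; $\mathrm{val}_1(\mathrm{Safe}(F))(s)=\sup_{\pi_1}\inf_{\pi_2}\Pr_s^{\pi_1,\pi_2}(\mathrm{Safe}(F))$. Let $T=S\setminus F$ and $W_1=\{s:\mathrm{val}_1(\mathrm{Safe}(F))(s)=1\}$. A selector $\xi$ is $k$-uniform if for all $s\in S\setminus(T\cup W_1)$ and all moves $a$ in the support of $\xi(s)$ there are integers $0\le i\le j\le k$ with $\xi(s)(a)=i/j$. *)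

theory Defs
  imports "HOL-Probability.Probability"
begin

text \<open>Concurrent game structures. States are the (finite) type 's, moves the (finite)
  type 'm, so S = UNIV and M = UNIV. G1 s, G2 s are the move sets, d the transition function.\<close>

definition cgs :: "('s::finite \<Rightarrow> 'm::finite set) \<Rightarrow> ('s \<Rightarrow> 'm set) \<Rightarrow> bool" where
  "cgs G1 G2 \<longleftrightarrow> (\<forall>s. G1 s \<noteq> {} \<and> G2 s \<noteq> {})"

definition strategy :: "('s \<Rightarrow> 'm set) \<Rightarrow> ('s list \<Rightarrow> 'm pmf) \<Rightarrow> bool" where
  "strategy G st \<longleftrightarrow> (\<forall>h. h \<noteq> [] \<longrightarrow> set_pmf (st h) \<subseteq> G (last h))"

definition selector :: "('s \<Rightarrow> 'm set) \<Rightarrow> ('s \<Rightarrow> 'm pmf) \<Rightarrow> bool" where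
  "selector G xi \<longleftrightarrow> (\<forall>s. set_pmf (xi s) \<subseteq> G s)"

definition memoryless :: "('s \<Rightarrow> 'm pmf) \<Rightarrow> ('s list \<Rightarrow> 'm pmf)" where
  "memoryless xi = (\<lambda>h. xi (last h))"

text \<open>Distribution of the history of length n+1 (prefix of the play) from s.\<close>
fun hist :: "('s \<Rightarrow> 'm \<Rightarrow> 'm \<Rightarrow> 's pmf) \<Rightarrow> 's \<Rightarrow> ('s list \<Rightarrow> 'm pmf) \<Rightarrow> ('s list \<Rightarrow> 'm pmf)
    \<Rightarrow> nat \<Rightarrow> 's list pmf" where
  "hist d s p1 p2 0 = return_pmf [s]"
| "hist d s p1 p2 (Suc n) =
     bind_pmf (hist d s p1 p2 n) (\<lambda>h.
     bind_pmf (p1 h) (\<lambda>a1.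
     bind_pmf (p2 h) (\<lambda>a2.
     map_pmf (\<lambda>t. h @ [t]) (d (last h) a1 a2))))"

text \<open>Pr_s^{p1,p2}(Safe F): probability that the play stays in F forever, i.e. (by
  continuity of the measure from above) the infimum over n of the probability that the
  first n+1 states lie in F.\<close>
definition prSafe :: "('s \<Rightarrow> 'm \<Rightarrow> 'm \<Rightarrow> 's pmf) \<Rightarrow> 's set \<Rightarrow> 's \<Rightarrow> ('s list \<Rightarrow> 'm pmf)
    \<Rightarrow> ('s list \<Rightarrow> 'm pmf) \<Rightarrow> real" where
  "prSafe d F s p1 p2 = (INF n. measure_pmf.prob (hist d s p1 p2 n) {h. set h \<subseteq> F})"

definition val1Safe :: "('s \<Rightarrow> 'm set) \<Rightarrow> ('s \<Rightarrow> 'm set) \<Rightarrow> ('s \<Rightarrow> 'm \<Rightarrow> 'm \<Rightarrow> 's pmf)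
    \<Rightarrow> 's set \<Rightarrow> 's \<Rightarrow> real" where
  "val1Safe G1 G2 d F s =
     (SUP p1\<in>{p. strategy G1 p}. INF p2\<in>{p. strategy G2 p}. prSafe d F s p1 p2)"

definition k_uniform :: "('s \<Rightarrow> 'm set) \<Rightarrow> ('s \<Rightarrow> 'm set) \<Rightarrow> ('s \<Rightarrow> 'm \<Rightarrow> 'm \<Rightarrow> 's pmf)
    \<Rightarrow> 's set \<Rightarrow> nat \<Rightarrow> ('s \<Rightarrow> 'm pmf) \<Rightarrow> bool" where
  "k_uniform G1 G2 d F k xi \<longleftrightarrow>
     (\<forall>s. s \<notin> (UNIV - F) \<and> s \<notin> {t. val1Safe G1 G2 d F t = 1} \<longrightarrow>
        (\<forall>a\<in>set_pmf (xi s). \<exists>i j::nat. i \<le> j \<and> j \<le> k \<and> pmf (xi s) a = real i / real j))"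

end

theory Submission imports Defs "HOL-Analysis.Analysis" begin


lemma hist_len: "h \<in> set_pmf (hist d s p1 p2 n) \<Longrightarrow> length h = Suc n"
  by (induction n arbitrary: h) auto

lemma hist_fin:
  fixes d :: "'s::finite \<Rightarrow> 'm \<Rightarrow> 'm \<Rightarrow> 's pmf"
  shows "finite (set_pmf (hist d s p1 p2 n))"
proof (induction n)
  case 0 then show ?case by simp
next
  case (Suc n)
  have "set_pmf (hist d s p1 p2 (Suc n)) \<subseteq> (\<lambda>(h,t). h @ [t]) ` (set_pmf (hist d s p1 p2 n) \<times> UNIV)"
    by (auto simp: set_bind_pmf)
  moreover have "finite ((\<lambda>(h,t). h @ [t]) ` (set_pmf (hist d s p1 p2 n) \<times> (UNIV::'s set)))"
    using Suc by simp
  ultimately show ?case by (rule finite_subset)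
qed

definition Kx :: "('s \<Rightarrow> 'm \<Rightarrow> 'm \<Rightarrow> 's pmf) \<Rightarrow> ('s list \<Rightarrow> 'm pmf) \<Rightarrow> ('s list \<Rightarrow> 'm pmf)
   \<Rightarrow> 's list \<Rightarrow> ('s list \<Rightarrow> real) \<Rightarrow> real" where
  "Kx d p1 p2 h f = (\<Sum>a\<in>UNIV. pmf (p1 h) a * (\<Sum>b\<in>UNIV. pmf (p2 h) b *
      (\<Sum>t\<in>UNIV. pmf (d (last h) a b) t * f (h @ [t]))))"

lemma exp_fin:
  fixes f :: "'a \<Rightarrow> real"
  assumes "finite (set_pmf P)"
  shows "measure_pmf.expectation P f = (\<Sum>h\<in>set_pmf P. pmf P h * f h)"
  using assms by (subst integral_measure_pmf_real[of "set_pmf P"]) (auto simp: mult.commute)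

lemma exp_UNIV:
  fixes f :: "'a::finite \<Rightarrow> real"
  shows "measure_pmf.expectation P f = (\<Sum>h\<in>UNIV. pmf P h * f h)"
  by (subst integral_measure_pmf_real[of UNIV]) (auto simp: mult.commute)

lemma hist_Suc_exp:
  fixes d :: "'s::finite \<Rightarrow> 'm::finite \<Rightarrow> 'm \<Rightarrow> 's pmf" and f :: "'s list \<Rightarrow> real"
  shows "measure_pmf.expectation (hist d s p1 p2 (Suc n)) f =
    (\<Sum>h\<in>set_pmf (hist d s p1 p2 n). pmf (hist d s p1 p2 n) h * Kx d p1 p2 h f)"
proof -
  have fin1: "finite (set_pmf (map_pmf (\<lambda>t. h @ [t]) (d (last h) a b)))" for h a b
    by simp
  have fin2: "finite (set_pmf (p2 h \<bind> (\<lambda>b. map_pmf (\<lambda>t. h @ [t]) (d (last h) a b))))" for h a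
    by (simp add: set_bind_pmf)
  have fin3: "finite (set_pmf (p1 h \<bind> (\<lambda>a. p2 h \<bind> (\<lambda>b. map_pmf (\<lambda>t. h @ [t]) (d (last h) a b)))))" for h
    by (simp add: set_bind_pmf)
  have inner: "measure_pmf.expectation (p1 h \<bind> (\<lambda>a. p2 h \<bind> (\<lambda>b. map_pmf (\<lambda>t. h @ [t]) (d (last h) a b)))) f
      = Kx d p1 p2 h f" for h
    unfolding Kx_def
    apply (subst pmf_expectation_bind[of UNIV])
      apply (simp_all add: fin2)
    apply (subst pmf_expectation_bind[of UNIV])
      apply (simp_all add: exp_UNIV)
    done
  show ?thesis
    apply (simp only: hist.simps)
    apply (subst pmf_expectation_bind[of "set_pmf (hist d s p1 p2 n)"])
       apply (simp_all add: hist_fin fin3 inner)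
    done
qed


lemma hist_step_le:
  fixes d :: "'s::finite \<Rightarrow> 'm::finite \<Rightarrow> 'm \<Rightarrow> 's pmf" and f g :: "'s list \<Rightarrow> real"
  assumes "\<And>h. h \<in> set_pmf (hist d s p1 p2 n) \<Longrightarrow> Kx d p1 p2 h f \<le> g h"
  shows "measure_pmf.expectation (hist d s p1 p2 (Suc n)) f \<le> measure_pmf.expectation (hist d s p1 p2 n) g"
proof -
  have "(\<Sum>h\<in>set_pmf (hist d s p1 p2 n). pmf (hist d s p1 p2 n) h * Kx d p1 p2 h f)
     \<le> (\<Sum>h\<in>set_pmf (hist d s p1 p2 n). pmf (hist d s p1 p2 n) h * g h)"
    using assms by (intro sum_mono mult_left_mono) auto
  then show ?thesis by (simp only: hist_Suc_exp exp_fin[OF hist_fin, of d s p1 p2 n g])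
qed

lemma hist_step_ge:
  fixes d :: "'s::finite \<Rightarrow> 'm::finite \<Rightarrow> 'm \<Rightarrow> 's pmf" and f g :: "'s list \<Rightarrow> real"
  assumes "\<And>h. h \<in> set_pmf (hist d s p1 p2 n) \<Longrightarrow> g h \<le> Kx d p1 p2 h f"
  shows "measure_pmf.expectation (hist d s p1 p2 n) g \<le> measure_pmf.expectation (hist d s p1 p2 (Suc n)) f"
proof -
  have "(\<Sum>h\<in>set_pmf (hist d s p1 p2 n). pmf (hist d s p1 p2 n) h * g h)
     \<le> (\<Sum>h\<in>set_pmf (hist d s p1 p2 n). pmf (hist d s p1 p2 n) h * Kx d p1 p2 h f)"
    using assms by (intro sum_mono mult_left_mono) auto
  then show ?thesis by (simp only: hist_Suc_exp exp_fin[OF hist_fin, of d s p1 p2 n g])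
qed

lemma prob_exp:
  "measure_pmf.prob P A = measure_pmf.expectation P (\<lambda>h. if h \<in> A then 1 else 0)"
proof -
  have "measure_pmf.expectation P (indicator A) = measure_pmf.prob P A"
    by simp
  moreover have "(\<lambda>h. if h \<in> A then 1 else 0) = (indicator A :: 'a \<Rightarrow> real)"
    by (auto simp: indicator_def fun_eq_iff)
  ultimately show ?thesis by simp
qed

lemma prSafe_nonneg: "0 \<le> prSafe d F s p1 p2"
  unfolding prSafe_def by (rule cINF_greatest) auto

lemma prSafe_le: "prSafe d F s p1 p2 \<le> measure_pmf.prob (hist d s p1 p2 n) {h. set h \<subseteq> F}"
  unfolding prSafe_def by (rule cINF_lower) (auto intro!: bdd_belowI[of _ 0])

lemma strategy_ex: "G s0 \<noteq> {} \<Longrightarrow> (\<forall>s. G s \<noteq> {}) \<Longrightarrow> {p. strategy G p} \<noteq> {}"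
proof -
  assume "\<forall>s. G s \<noteq> {}"
  then have "strategy G (\<lambda>h. return_pmf (SOME a. a \<in> G (last h)))"
    unfolding strategy_def by (auto simp: some_in_eq)
  then show ?thesis by blast
qed

lemma Kx_return:
  fixes bs :: "'h list \<Rightarrow> 'b::finite"
  shows "Kx d p1 (\<lambda>h. return_pmf (bs h)) h f =
    (\<Sum>a\<in>UNIV. pmf (p1 h) a * (\<Sum>t\<in>UNIV. pmf (d (last h) a (bs h)) t * f (h @ [t])))"
proof -
  have "(\<Sum>b\<in>UNIV. pmf (return_pmf (bs h)) b * g b) = g (bs h)" for g :: "_ \<Rightarrow> real"
  proof -
    have "(\<Sum>b\<in>UNIV. pmf (return_pmf (bs h)) b * g b) = (\<Sum>b\<in>UNIV. if b = bs h then g b else 0)"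
      by (intro sum.cong) (auto simp: pmf_return)
    also have "\<dots> = g (bs h)" by (simp add: sum.delta')
    finally show ?thesis .
  qed
  then show ?thesis unfolding Kx_def by simp
qed

lemma var_id:
  fixes q m :: "'a \<Rightarrow> real"
  assumes "finite A" "(\<Sum>a\<in>A. q a) = 1"
  shows "(\<Sum>a\<in>A. q a * (m a)^2) = (\<Sum>a\<in>A. q a * m a)^2 + (\<Sum>a\<in>A. q a * (m a - (\<Sum>a\<in>A. q a * m a))^2)"
proof -
  define mu where "mu = (\<Sum>a\<in>A. q a * m a)"
  have "(\<Sum>a\<in>A. q a * (m a - mu)^2) = (\<Sum>a\<in>A. q a * (m a)^2 - 2 * mu * (q a * m a) + mu^2 * q a)"
    by (intro sum.cong) (auto simp: power2_eq_square algebra_simps)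
  also have "\<dots> = (\<Sum>a\<in>A. q a * (m a)^2) - 2 * mu * mu + mu^2"
    using assms by (simp add: sum.distrib sum_subtractf sum_distrib_left[symmetric] mu_def)
  finally show ?thesis unfolding mu_def[symmetric] by (simp add: power2_eq_square)
qed

lemma two_pt: "0 \<le> q1 \<Longrightarrow> 0 \<le> q2 \<Longrightarrow> q1 + q2 \<le> 1 \<Longrightarrow>
   q1 * q2 * (x - z)^2 \<le> q1 * x^2 + q2 * (z::real)^2"
proof -
  assume h: "0 \<le> q1" "0 \<le> q2" "q1 + q2 \<le> 1"
  have "q1 * x^2 + q2 * z^2 \<ge> q1 * (q1 + q2) * x^2 + q2 * (q1 + q2) * z^2"
    using h by (intro add_mono mult_right_mono) (auto intro: mult_left_le)
  moreover have "q1 * (q1 + q2) * x^2 + q2 * (q1 + q2) * z^2 - q1 * q2 * (x - z)^2 = (q1 * x + q2 * z)^2"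
    by (simp add: power2_eq_square algebra_simps)
  ultimately show ?thesis by (smt (verit) zero_le_power2)
qed

lemma key:
  fixes x q m sq :: "'a::finite \<Rightarrow> real"
  assumes x0: "\<And>a. 0 \<le> x a" and xs: "(\<Sum>a\<in>UNIV. x a) = 1"
    and q0: "\<And>a. 0 \<le> q a" and qs: "(\<Sum>a\<in>UNIV. q a) = 1"
    and supp: "\<And>a. q a \<noteq> 0 \<Longrightarrow> 0 < x a"
    and m0: "\<And>a. 0 \<le> m a" and m1: "\<And>a. m a \<le> 1" and sqm: "\<And>a. (m a)^2 \<le> sq a"
    and y0: "0 \<le> y" and hy: "y \<le> (\<Sum>a\<in>UNIV. x a * m a)"
    and err: "(\<Sum>a\<in>UNIV. \<bar>x a - q a\<bar>) \<le> e"
    and al: "0 \<le> \<alpha>" and ce: "e + 2 * \<alpha> * e \<le> \<alpha> * c"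
    and var: "(\<forall>a a'. 0 < x a \<longrightarrow> 0 < x a' \<longrightarrow> m a = m a') \<or>
              (\<exists>a1 a2. a1 \<noteq> a2 \<and> c \<le> q a1 * q a2 * (m a1 - m a2)^2)"
  shows "y + \<alpha> * y^2 \<le> (\<Sum>a\<in>UNIV. q a * (m a + \<alpha> * sq a))"
proof -
  define mu where "mu = (\<Sum>a\<in>UNIV. q a * m a)"
  define V where "V = (\<Sum>a\<in>UNIV. q a * (m a - mu)^2)"
  have V0: "0 \<le> V" unfolding V_def using q0 by (intro sum_nonneg) auto
  have mu0: "0 \<le> mu" unfolding mu_def using q0 m0 by (intro sum_nonneg) auto
  have mu1: "mu \<le> 1"
  proof -
    have "mu \<le> (\<Sum>a\<in>UNIV. q a)" unfolding mu_def using q0 m1 by (intro sum_mono) (simp add: mult_left_le)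
    then show ?thesis using qs by simp
  qed
  have y1: "y \<le> 1"
  proof -
    have "(\<Sum>a\<in>UNIV. x a * m a) \<le> (\<Sum>a\<in>UNIV. x a)" using x0 m1 by (intro sum_mono) (simp add: mult_left_le)
    then show ?thesis using xs hy by simp
  qed
  have e1: "(\<Sum>a\<in>UNIV. q a * (m a + \<alpha> * sq a)) = mu + \<alpha> * (\<Sum>a\<in>UNIV. q a * sq a)"
    unfolding mu_def by (simp add: algebra_simps sum.distrib sum_distrib_left)
  have e2: "(\<Sum>a\<in>UNIV. q a * (m a)^2) \<le> (\<Sum>a\<in>UNIV. q a * sq a)"
    using q0 sqm by (intro sum_mono mult_left_mono) auto
  have e3: "(\<Sum>a\<in>UNIV. q a * (m a)^2) = mu^2 + V"
    unfolding mu_def V_def by (rule var_id) (use qs in auto)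
  have "\<alpha> * (mu^2 + V) \<le> \<alpha> * (\<Sum>a\<in>UNIV. q a * sq a)"
    using e2 e3 al by (intro mult_left_mono) auto
  then have main: "mu + \<alpha> * (mu^2 + V) \<le> (\<Sum>a\<in>UNIV. q a * (m a + \<alpha> * sq a))"
    using e1 by linarith
  have easy: "y + \<alpha> * y^2 \<le> mu + \<alpha> * (mu^2 + V)" if "y \<le> mu"
  proof -
    have "y^2 \<le> mu^2" using that y0 by (intro power_mono) auto
    then show ?thesis using that al V0 by (smt (verit) mult_left_mono)
  qed
  show ?thesis
  proof (cases "y \<le> mu")
    case True
    then show ?thesis using easy main by linarith
  next
    case False
    have "y - mu \<le> (\<Sum>a\<in>UNIV. x a * m a) - mu" using hy by simp
    also have "\<dots> = (\<Sum>a\<in>UNIV. (x a - q a) * m a)"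
      unfolding mu_def by (simp add: sum_subtractf left_diff_distrib)
    also have "\<dots> \<le> (\<Sum>a\<in>UNIV. \<bar>x a - q a\<bar>)"
    proof (intro sum_mono)
      fix a
      have "(x a - q a) * m a \<le> \<bar>x a - q a\<bar> * m a" using m0 by (intro mult_right_mono) auto
      also have "\<dots> \<le> \<bar>x a - q a\<bar>" using m1 by (simp add: mult_left_le)
      finally show "(x a - q a) * m a \<le> \<bar>x a - q a\<bar>" .
    qed
    also have "\<dots> \<le> e" by (rule err)
    finally have ye: "y - mu \<le> e" .
    show ?thesis
    proof (cases "\<forall>a a'. 0 < x a \<longrightarrow> 0 < x a' \<longrightarrow> m a = m a'")
      case True
      obtain a0 where a0: "0 < x a0"
      proof -
        have "\<exists>a. x a \<noteq> 0" using xs by (metis (no_types) sum.neutral zero_neq_one)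
        then show ?thesis using x0 that by (metis less_eq_real_def)
      qed
      have "mu = (\<Sum>a\<in>UNIV. q a * m a0)" unfolding mu_def
        by (intro sum.cong refl) (metis True a0 supp mult_zero_left)
      also have "\<dots> = m a0" using qs by (simp add: sum_distrib_right[symmetric])
      finally have "mu = m a0" .
      moreover have "(\<Sum>a\<in>UNIV. x a * m a) = (\<Sum>a\<in>UNIV. x a * m a0)"
        by (intro sum.cong refl) (metis True a0 x0 less_eq_real_def mult_zero_left)
      moreover have "\<dots> = m a0" using xs by (simp add: sum_distrib_right[symmetric])
      ultimately have "y \<le> mu" using hy by simp
      then show ?thesis using False by simp
    next
      case nc: False
      then obtain a1 a2 where a12: "a1 \<noteq> a2" "c \<le> q a1 * q a2 * (m a1 - m a2)^2" using var by blast
      have "V \<ge> q a1 * (m a1 - mu)^2 + q a2 * (m a2 - mu)^2"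
      proof -
        have "(\<Sum>a\<in>{a1,a2}. q a * (m a - mu)^2) \<le> V" unfolding V_def
          using q0 by (intro sum_mono2) auto
        then show ?thesis using a12 by simp
      qed
      moreover have "q a1 + q a2 \<le> 1"
      proof -
        have "(\<Sum>a\<in>{a1,a2}. q a) \<le> (\<Sum>a\<in>UNIV. q a)" using q0 by (intro sum_mono2) auto
        then show ?thesis using a12 qs by simp
      qed
      ultimately have "q a1 * q a2 * ((m a1 - mu) - (m a2 - mu))^2 \<le> V"
        using two_pt[of "q a1" "q a2" "m a1 - mu" "m a2 - mu", OF q0 q0] by linarith
      then have cV: "c \<le> V" using a12 by simp
      have "y^2 - mu^2 = (y - mu) * (y + mu)" by (simp add: power2_eq_square algebra_simps)
      also have "\<dots> \<le> e * 2"
        using ye y1 mu1 False mu0 by (intro mult_mono) auto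
      finally have "y^2 \<le> mu^2 + 2 * e" by simp
      then have "\<alpha> * y^2 \<le> \<alpha> * (mu^2 + 2 * e)" using al by (rule mult_left_mono)
      moreover have "\<alpha> * c \<le> \<alpha> * V" using cV al by (rule mult_left_mono)
      ultimately have "y + \<alpha> * y^2 \<le> mu + \<alpha> * (mu^2 + V)" using ye ce
        by (simp add: algebra_simps)
      then show ?thesis using main by linarith
    qed
  qed
qed


lemma round:
  fixes x :: "'a::finite \<Rightarrow> real" and N :: nat
  assumes x0: "\<And>a. 0 \<le> x a" and xs: "(\<Sum>a\<in>UNIV. x a) = 1" and NM: "CARD('a) \<le> N"
  defines "r \<equiv> \<lambda>a. if 0 < x a then nat \<lceil>real N * x a\<rceil> else 0"
  defines "J \<equiv> (\<Sum>a\<in>UNIV. r a)"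
  shows "N \<le> J" "J \<le> N + CARD('a)" "\<And>a. r a \<le> J" "\<And>a. r a \<noteq> 0 \<longleftrightarrow> 0 < x a"
    "\<And>a. \<bar>x a - real (r a) / real J\<bar> \<le> real CARD('a) / real N"
    "\<And>a. x a / 2 \<le> real (r a) / real J"
proof -
  define M where "M = CARD('a)"
  have M1: "1 \<le> M" unfolding M_def by (simp add: Suc_leI)
  have N1: "1 \<le> N" using NM M1 unfolding M_def by linarith
  have rlo: "real N * x a \<le> real (r a)" for a
    unfolding r_def using x0[of a] by (auto simp: less_eq_real_def) linarith
  have rhi: "real (r a) \<le> real N * x a + 1" for a
    unfolding r_def using x0[of a] by auto
  have Jr: "real J = (\<Sum>a\<in>UNIV. real (r a))" unfolding J_def by simp
  have "real N = (\<Sum>a\<in>UNIV. real N * x a)" using xs by (simp add: sum_distrib_left[symmetric])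
  also have "\<dots> \<le> real J" unfolding Jr using rlo by (intro sum_mono) auto
  finally have JN: "real N \<le> real J" .
  then show "N \<le> J" by simp
  have "real J \<le> (\<Sum>a\<in>UNIV. real N * x a + 1)" unfolding Jr using rhi by (intro sum_mono) auto
  also have "\<dots> = real N + real M" using xs by (simp add: sum.distrib sum_distrib_left[symmetric] M_def)
  finally have JNM: "real J \<le> real N + real M" .
  then show "J \<le> N + CARD('a)" unfolding M_def by linarith
  show "r a \<le> J" for a unfolding J_def by (rule member_le_sum) auto
  show "r a \<noteq> 0 \<longleftrightarrow> 0 < x a" for a
  proof
    assume "r a \<noteq> 0" then show "0 < x a" unfolding r_def by (auto split: if_splits)
  next
    assume xa: "0 < x a"
    have "0 < real N * x a" using xa N1 by simp
    then show "r a \<noteq> 0" unfolding r_def using xa by auto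
  qed
  have Jpos: "0 < real J" using JN N1 by linarith
  have x1: "x a \<le> 1" for a
  proof -
    have "x a \<le> (\<Sum>a\<in>UNIV. x a)" by (rule member_le_sum) (auto simp: x0)
    then show ?thesis using xs by simp
  qed
  have qlo: "real N * x a / (real N + real M) \<le> real (r a) / real J" for a
  proof -
    have "real N * x a / (real N + real M) \<le> real N * x a / real J"
      using x0[of a] JNM Jpos by (intro divide_left_mono) auto
    also have "\<dots> \<le> real (r a) / real J" using rlo Jpos by (intro divide_right_mono) auto
    finally show ?thesis .
  qed
  have qhi: "real (r a) / real J \<le> x a + 1 / real N" for a
  proof -
    have "real (r a) / real J \<le> real (r a) / real N" using JN N1 by (intro divide_left_mono) auto
    also have "\<dots> \<le> (real N * x a + 1) / real N" using rhi N1 by (intro divide_right_mono) auto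
    also have "\<dots> = x a + 1 / real N" using N1 by (simp add: field_simps)
    finally show ?thesis .
  qed
  show "\<bar>x a - real (r a) / real J\<bar> \<le> real CARD('a) / real N" for a
  proof -
    have "1 / real N \<le> real M / real N" using M1 by (intro divide_right_mono) auto
    have a: "real (r a) / real J - x a \<le> real M / real N"
      using qhi[of a] \<open>1 / real N \<le> real M / real N\<close> by linarith
    have "x a - real N * x a / (real N + real M) = x a * real M / (real N + real M)"
      using N1 by (simp add: field_simps)
    also have "\<dots> \<le> real M / (real N + real M)" using x1[of a] M1 by (intro divide_right_mono) (auto simp: mult_left_le_one_le x0)
    also have "\<dots> \<le> real M / real N" using N1 by (intro divide_left_mono) auto
    finally have b: "x a - real (r a) / real J \<le> real M / real N" using qlo[of a] by linarith
    show ?thesis using a b unfolding M_def by linarith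
  qed
  show "x a / 2 \<le> real (r a) / real J" for a
  proof -
    have "x a / 2 \<le> real N * x a / (real N + real M)"
      using NM N1 x0[of a] unfolding M_def[symmetric] by (simp add: field_simps) (smt (verit) of_nat_le_iff mult_right_mono)
    then show ?thesis using qlo[of a] by linarith
  qed
qed


lemma embed_fin:
  fixes f :: "'a::finite \<Rightarrow> real"
  assumes "\<And>a. 0 \<le> f a" "(\<Sum>a\<in>UNIV. f a) = 1"
  shows "pmf (embed_pmf f) a = f a"
proof (rule pmf_embed_pmf)
  show "0 \<le> f x" for x by (rule assms(1))
  have "(\<integral>\<^sup>+x. ennreal (f x) \<partial>count_space UNIV) = (\<Sum>x\<in>UNIV. ennreal (f x))"
    by (rule nn_integral_count_space_finite) simp
  also have "\<dots> = ennreal (\<Sum>x\<in>UNIV. f x)" using assms(1) by (rule sum_ennreal)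
  finally show "(\<integral>\<^sup>+x. ennreal (f x) \<partial>count_space UNIV) = 1" using assms(2) by simp
qed

locale game =
  fixes G1 G2 :: "'s::finite \<Rightarrow> 'm::finite set"
    and d :: "'s \<Rightarrow> 'm \<Rightarrow> 'm \<Rightarrow> 's pmf"
    and F :: "'s set"
  assumes cg: "cgs G1 G2"
begin

lemma G1ne: "G1 s \<noteq> {}" and G2ne: "G2 s \<noteq> {}"
  using cg by (auto simp: cgs_def)

definition Dl :: "'s \<Rightarrow> (real^'m) set" where
  "Dl s = {x. (\<forall>a. 0 \<le> x$a) \<and> (\<forall>a. a \<notin> G1 s \<longrightarrow> x$a = 0) \<and> (\<Sum>a\<in>UNIV. x$a) = 1}"

definition Ev :: "real^'m \<Rightarrow> 's \<Rightarrow> 'm \<Rightarrow> ('s \<Rightarrow> real) \<Rightarrow> real" where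
  "Ev x s b f = (\<Sum>a\<in>UNIV. x$a * (\<Sum>t\<in>UNIV. pmf (d s a b) t * f t))"

definition val2 :: "real^'m \<Rightarrow> 's \<Rightarrow> ('s \<Rightarrow> real) \<Rightarrow> real" where
  "val2 x s f = Min ((\<lambda>b. Ev x s b f) ` G2 s)"

definition Pre :: "('s \<Rightarrow> real) \<Rightarrow> 's \<Rightarrow> real" where
  "Pre f s = (if s \<in> F then (SUP x\<in>Dl s. val2 x s f) else 0)"

fun u :: "nat \<Rightarrow> 's \<Rightarrow> real" where
  "u 0 = (\<lambda>s. if s \<in> F then 1 else 0)"
| "u (Suc n) = Pre (u n)"

lemma Dl_ne: "Dl s \<noteq> {}"
proof -
  obtain a0 where a0: "a0 \<in> G1 s" using G1ne by blast
  let ?x = "(\<chi> a. if a = a0 then 1 else 0) :: real^'m"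
  have "?x \<in> Dl s" using a0 by (auto simp: Dl_def)
  then show ?thesis by blast
qed

lemma sum_pmf_UNIV: "(\<Sum>t\<in>UNIV. pmf (p::'a::finite pmf) t) = 1"
  by (rule sum_pmf_eq_1) auto

lemma inner_bounds:
  assumes "\<And>t. 0 \<le> f t" "\<And>t. f t \<le> 1"
  shows "0 \<le> (\<Sum>t\<in>UNIV. pmf (p::'a::finite pmf) t * f t)"
        "(\<Sum>t\<in>UNIV. pmf p t * f t) \<le> 1"
proof -
  show "0 \<le> (\<Sum>t\<in>UNIV. pmf p t * f t)" using assms by (intro sum_nonneg) auto
  have "(\<Sum>t\<in>UNIV. pmf p t * f t) \<le> (\<Sum>t\<in>UNIV. pmf p t)"
    using assms by (intro sum_mono) (simp add: mult_left_le)
  then show "(\<Sum>t\<in>UNIV. pmf p t * f t) \<le> 1" by (simp add: sum_pmf_UNIV)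
qed

lemma Ev_bounds:
  assumes "x \<in> Dl s" "\<And>t. 0 \<le> f t" "\<And>t. f t \<le> 1"
  shows "0 \<le> Ev x s b f" "Ev x s b f \<le> 1"
proof -
  have x0: "\<And>a. 0 \<le> x$a" and xs: "(\<Sum>a\<in>UNIV. x$a) = 1" using assms(1) by (auto simp: Dl_def)
  show "0 \<le> Ev x s b f" unfolding Ev_def
    using x0 inner_bounds(1)[of f, OF assms(2,3)] by (auto intro!: sum_nonneg)
  have "Ev x s b f \<le> (\<Sum>a\<in>UNIV. x$a)" unfolding Ev_def
    using x0 inner_bounds[of f, OF assms(2,3)] by (intro sum_mono) (simp add: mult_left_le)
  then show "Ev x s b f \<le> 1" using xs by simp
qed

lemma Ev_mono:
  assumes "x \<in> Dl s" "\<And>t. f t \<le> g t"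
  shows "Ev x s b f \<le> Ev x s b g"
proof -
  have x0: "\<And>a. 0 \<le> x$a" using assms(1) by (auto simp: Dl_def)
  show ?thesis unfolding Ev_def using x0 assms(2)
    by (intro sum_mono mult_left_mono) (auto intro!: mult_left_mono)
qed

lemma val2_ex: "\<exists>b\<in>G2 s. val2 x s f = Ev x s b f"
proof -
  have "Min ((\<lambda>b. Ev x s b f) ` G2 s) \<in> (\<lambda>b. Ev x s b f) ` G2 s"
    using G2ne[of s] by (intro Min_in) auto
  then show ?thesis unfolding val2_def by auto
qed

lemma val2_le: "b \<in> G2 s \<Longrightarrow> val2 x s f \<le> Ev x s b f"
  unfolding val2_def by (rule Min_le) auto

lemma val2_bounds:
  assumes "x \<in> Dl s" "\<And>t. 0 \<le> f t" "\<And>t. f t \<le> 1"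
  shows "0 \<le> val2 x s f" "val2 x s f \<le> 1"
  using val2_ex[of s x f] Ev_bounds[OF assms] by auto

lemma val2_mono:
  assumes "x \<in> Dl s" "\<And>t. f t \<le> g t"
  shows "val2 x s f \<le> val2 x s g"
proof -
  obtain b where b: "b \<in> G2 s" "val2 x s g = Ev x s b g" using val2_ex by blast
  have "val2 x s f \<le> Ev x s b f" by (rule val2_le[OF b(1)])
  also have "\<dots> \<le> Ev x s b g" by (rule Ev_mono[OF assms])
  finally show ?thesis using b by simp
qed

lemma Pre_bounds:
  assumes "\<And>t. 0 \<le> f t" "\<And>t. f t \<le> 1"
  shows "0 \<le> Pre f s" "Pre f s \<le> 1"
proof -
  have bdd: "bdd_above ((\<lambda>x. val2 x s f) ` Dl s)"
    using val2_bounds[OF _ assms] by (intro bdd_aboveI[of _ 1]) auto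
  obtain x0 where x0: "x0 \<in> Dl s" using Dl_ne by blast
  have "0 \<le> val2 x0 s f" using val2_bounds[OF x0 assms] by simp
  also have "\<dots> \<le> (SUP x\<in>Dl s. val2 x s f)" using bdd x0 by (rule cSUP_upper2) simp
  finally have "0 \<le> (SUP x\<in>Dl s. val2 x s f)" .
  then show "0 \<le> Pre f s" by (simp add: Pre_def)
  have "(SUP x\<in>Dl s. val2 x s f) \<le> 1"
    using Dl_ne val2_bounds[OF _ assms] by (intro cSUP_least) auto
  then show "Pre f s \<le> 1" by (simp add: Pre_def)
qed

lemma Pre_mono:
  assumes "\<And>t. 0 \<le> g t" "\<And>t. g t \<le> 1" "\<And>t. f t \<le> g t"
  shows "Pre f s \<le> Pre g s"
proof -
  have bdd: "bdd_above ((\<lambda>x. val2 x s g) ` Dl s)"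
    using val2_bounds[OF _ assms(1,2)] by (intro bdd_aboveI[of _ 1]) auto
  have "(SUP x\<in>Dl s. val2 x s f) \<le> (SUP x\<in>Dl s. val2 x s g)"
    using Dl_ne bdd val2_mono[of _ s f g] assms(3) by (intro cSUP_mono) auto
  then show ?thesis by (simp add: Pre_def)
qed

lemma u_bounds: "0 \<le> u n s" "u n s \<le> 1"
proof (induction n arbitrary: s)
  case 0 { case 1 show ?case by simp next case 2 show ?case by simp }
next
  case (Suc n) { case 1 show ?case using Pre_bounds Suc by simp
  next case 2 show ?case using Pre_bounds Suc by simp }
qed

lemma u_notF: "s \<notin> F \<Longrightarrow> u n s = 0"
  by (cases n) (auto simp: Pre_def)

lemma u_dec: "u (Suc n) s \<le> u n s"
proof (induction n arbitrary: s)
  case 0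
  show ?case using u_bounds[of "Suc 0" s] u_notF[of s "Suc 0"] by (cases "s \<in> F") auto
next
  case (Suc n)
  show ?case using Pre_mono[of "u n" "u (Suc n)"] u_bounds Suc by simp
qed

lemma u_decseq: "decseq (\<lambda>n. u n s)"
  using u_dec by (simp add: decseq_SucI)

definition w :: "'s \<Rightarrow> real" where "w s = (INF n. u n s)"

lemma bdd_u: "bdd_below (range (\<lambda>n. u n s))"
  using u_bounds by (intro bdd_belowI[of _ 0]) auto

lemma w_le: "w s \<le> u n s"
  unfolding w_def using bdd_u by (rule cINF_lower) simp

lemma w_bounds: "0 \<le> w s" "w s \<le> 1"
proof -
  show "0 \<le> w s" unfolding w_def using u_bounds by (auto intro!: cINF_greatest)
  show "w s \<le> 1" using w_le[of s 0] u_bounds(2)[of 0 s] by linarith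
qed

lemma w_notF: "s \<notin> F \<Longrightarrow> w s = 0"
  using w_le[of s 0] w_bounds[of s] by simp

lemma u_lim: "(\<lambda>n. u n s) \<longlonglongrightarrow> w s"
  unfolding w_def by (rule LIMSEQ_decseq_INF[OF bdd_u u_decseq])

lemma cont_lin: "continuous_on A (\<lambda>x::real^'m. \<Sum>a\<in>UNIV. x$a * c a)"
  by (intro continuous_on_sum continuous_on_mult_right continuous_on_component continuous_on_id)

lemma cont_sum: "continuous_on A (\<lambda>x::real^'m. \<Sum>a\<in>UNIV. x$a)"
  by (intro continuous_on_sum continuous_on_component continuous_on_id)

lemma Dl_compact: "compact (Dl s)"
proof -
  have "Dl s = (\<Inter>a. {x. 0 \<le> x$a}) \<inter> (\<Inter>a\<in>-G1 s. {x. x$a = 0}) \<inter> {x. (\<Sum>a\<in>UNIV. x$a) = 1}"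
    by (auto simp: Dl_def)
  also have "closed \<dots>"
    by (intro closed_Int closed_INT ballI closed_Collect_le closed_Collect_eq continuous_on_const
        cont_sum continuous_on_component continuous_on_id)
  finally have cl: "closed (Dl s)" .
  have "Dl s \<subseteq> cball 0 1"
  proof
    fix x assume x: "x \<in> Dl s"
    have "norm x \<le> (\<Sum>a\<in>UNIV. \<bar>x$a\<bar>)" by (rule norm_le_l1_cart)
    also have "\<dots> = 1" using x by (simp add: Dl_def)
    finally show "x \<in> cball 0 1" by simp
  qed
  then have "bounded (Dl s)" using bounded_cball bounded_subset by blast
  with cl show ?thesis using compact_eq_bounded_closed by blast
qed

lemma Ev_tendsto: "(\<lambda>n. Ev x s b (u n)) \<longlonglongrightarrow> Ev x s b w"
  unfolding Ev_def by (intro tendsto_intros u_lim)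

lemma local_opt:
  assumes sF: "s \<in> F"
  shows "\<exists>x\<in>Dl s. \<forall>b\<in>G2 s. w s \<le> Ev x s b w"
proof -
  define A where "A n = {x \<in> Dl s. \<forall>b\<in>G2 s. w s - 1 / real (Suc n) \<le> Ev x s b (u n)}" for n
  have cA: "compact (A n)" for n
  proof -
    have eq: "A n = Dl s \<inter> {x. \<forall>b\<in>G2 s. w s - 1 / real (Suc n) \<le> Ev x s b (u n)}"
      by (auto simp: A_def)
    have cl: "closed {x. \<forall>b\<in>G2 s. w s - 1 / real (Suc n) \<le> Ev x s b (u n)}"
    proof -
      have "{x. \<forall>b\<in>G2 s. w s - 1 / real (Suc n) \<le> Ev x s b (u n)}
           = (\<Inter>b\<in>G2 s. {x. w s - 1 / real (Suc n) \<le> Ev x s b (u n)})" by auto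
      also have "closed \<dots>" unfolding Ev_def
        by (intro closed_INT ballI closed_Collect_le continuous_on_const cont_lin)
      finally show ?thesis .
    qed
    show ?thesis unfolding eq by (rule compact_Int_closed[OF Dl_compact cl])
  qed
  have neA: "A n \<noteq> {}" for n
  proof -
    have bdd: "bdd_above ((\<lambda>x. val2 x s (u n)) ` Dl s)"
      using val2_bounds[OF _ u_bounds] by (intro bdd_aboveI[of _ 1]) auto
    have "w s - 1 / real (Suc n) < w s" by simp
    also have "w s \<le> u (Suc n) s" by (rule w_le)
    also have "u (Suc n) s = (SUP x\<in>Dl s. val2 x s (u n))" using sF by (simp add: Pre_def)
    finally obtain x where x: "x \<in> Dl s" "w s - 1 / real (Suc n) < val2 x s (u n)"
      using less_cSUP_iff[OF Dl_ne bdd] by blast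
    then have "x \<in> A n" unfolding A_def using val2_le[of _ s x "u n"] by force
    then show ?thesis by blast
  qed
  have monoA: "A n \<subseteq> A m" if "m \<le> n" for m n
  proof
    fix x assume x: "x \<in> A n"
    have um: "u n t \<le> u m t" for t using u_decseq[of t] that by (simp add: decseq_def)
    have "1 / real (Suc n) \<le> 1 / real (Suc m)" using that by (simp add: frac_le)
    moreover have xD: "x \<in> Dl s" using x by (simp add: A_def)
    moreover have "Ev x s b (u n) \<le> Ev x s b (u m)" for b using Ev_mono[OF xD um] .
    ultimately show "x \<in> A m" using x unfolding A_def by (smt (verit) mem_Collect_eq)
  qed
  have "\<Inter>(range A) \<noteq> {}" by (rule compact_nest[OF cA neA monoA])
  then obtain x where x: "x \<in> \<Inter>(range A)" by (meson ex_in_conv)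
  then have "x \<in> A 0" by blast
  then have xD: "x \<in> Dl s" by (simp add: A_def)
  have "w s \<le> Ev x s b w" if b: "b \<in> G2 s" for b
  proof (rule LIMSEQ_le)
    show "(\<lambda>n. w s - 1 / real (Suc n)) \<longlonglongrightarrow> w s"
      using tendsto_diff[OF tendsto_const LIMSEQ_Suc[OF lim_1_over_n]] by simp
    show "(\<lambda>n. Ev x s b (u n)) \<longlonglongrightarrow> Ev x s b w" by (rule Ev_tendsto)
    show "\<exists>N. \<forall>n\<ge>N. w s - 1 / real (Suc n) \<le> Ev x s b (u n)"
    proof (intro exI allI impI)
      fix n :: nat
      have "x \<in> A n" using x by blast
      then show "w s - 1 / real (Suc n) \<le> Ev x s b (u n)" using b by (simp add: A_def)
    qed
  qed
  then show ?thesis using xD by blast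
qed

lemma strat_Dl:
  assumes "strategy G1 p1" "h \<noteq> []"
  shows "(\<chi> a. pmf (p1 h) a) \<in> Dl (last h)"
proof -
  have "set_pmf (p1 h) \<subseteq> G1 (last h)" using assms by (simp add: strategy_def)
  then have "a \<notin> G1 (last h) \<Longrightarrow> pmf (p1 h) a = 0" for a by (auto simp: set_pmf_iff)
  then show ?thesis unfolding Dl_def mem_Collect_eq vec_lambda_beta
    by (simp add: sum_pmf_UNIV)
qed

lemma G2_strats: "{p. strategy G2 p} \<noteq> {}"
  using G2ne by (intro strategy_ex) auto

lemma G1_strats: "{p. strategy G1 p} \<noteq> {}"
  using G1ne by (intro strategy_ex) auto

lemma Pre_upper:
  assumes "x \<in> Dl s" "s \<in> F" "\<And>t. 0 \<le> f t" "\<And>t. f t \<le> 1"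
  shows "val2 x s f \<le> Pre f s"
proof -
  have bdd: "bdd_above ((\<lambda>x. val2 x s f) ` Dl s)"
    using val2_bounds[OF _ assms(3,4)] by (intro bdd_aboveI[of _ 1]) auto
  show ?thesis using assms(2) cSUP_upper[OF assms(1) bdd] by (simp add: Pre_def)
qed

lemma val_le_u:
  assumes p1: "strategy G1 p1"
  shows "(INF p2\<in>{p. strategy G2 p}. prSafe d F s p1 p2) \<le> u n s"
proof -
  define xv where "xv h = (\<chi> a. pmf (p1 h) a)" for h
  define bs where "bs h = (SOME b. b \<in> G2 (last h) \<and>
      val2 (xv h) (last h) (u (n - length h)) = Ev (xv h) (last h) b (u (n - length h)))" for h
  have bs: "bs h \<in> G2 (last h) \<and> val2 (xv h) (last h) (u (n - length h)) = Ev (xv h) (last h) (bs h) (u (n - length h))" for h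
  proof -
    obtain b where "b \<in> G2 (last h)" "val2 (xv h) (last h) (u (n - length h)) = Ev (xv h) (last h) b (u (n - length h))"
      using val2_ex by blast
    then have "\<exists>b. b \<in> G2 (last h) \<and> val2 (xv h) (last h) (u (n - length h)) = Ev (xv h) (last h) b (u (n - length h))"
      by blast
    then show ?thesis unfolding bs_def by (rule someI_ex)
  qed
  define p2 where "p2 h = return_pmf (bs h)" for h
  have p2s: "strategy G2 p2" using bs by (auto simp: strategy_def p2_def)
  define phi where "phi m h = (if set h \<subseteq> F then u m (last h) else 0)" for m h
  have claim: "j \<le> n \<Longrightarrow> measure_pmf.expectation (hist d s p1 p2 j) (phi (n - j)) \<le> u n s" for j
  proof (induction j)
    case 0
    then show ?case using u_notF[of s n] by (auto simp: phi_def)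
  next
    case (Suc j)
    have "measure_pmf.expectation (hist d s p1 p2 (Suc j)) (phi (n - Suc j))
        \<le> measure_pmf.expectation (hist d s p1 p2 j) (phi (n - j))"
    proof (rule hist_step_le)
      fix h assume h: "h \<in> set_pmf (hist d s p1 p2 j)"
      then have lh: "length h = Suc j" by (rule hist_len)
      then have hne: "h \<noteq> []" by auto
      show "Kx d p1 p2 h (phi (n - Suc j)) \<le> phi (n - j) h"
      proof (cases "set h \<subseteq> F")
        case False
        then have z: "phi (n - Suc j) (h @ [t]) = 0" for t by (simp add: phi_def)
        have z2: "phi (n - j) h = 0" using False by (simp add: phi_def)
        show ?thesis unfolding Kx_def z z2 by simp
      next
        case True
        have lF: "last h \<in> F" using True hne by auto
        have e: "phi (n - Suc j) (h @ [t]) = u (n - Suc j) t" for t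
          using True u_notF[of t] by (auto simp: phi_def)
        have "Kx d p1 p2 h (phi (n - Suc j)) = Ev (xv h) (last h) (bs h) (u (n - length h))"
          unfolding p2_def Kx_return e Ev_def xv_def lh by simp
        also have "\<dots> = val2 (xv h) (last h) (u (n - length h))" using bs by simp
        also have "\<dots> \<le> Pre (u (n - length h)) (last h)"
          using Pre_upper[OF _ lF u_bounds] strat_Dl[OF p1 hne] by (simp add: xv_def)
        also have "\<dots> = u (n - j) (last h)"
        proof -
          have "n - j = Suc (n - length h)" using Suc.prems lh by simp
          then show ?thesis by simp
        qed
        also have "\<dots> = phi (n - j) h" using True by (simp add: phi_def)
        finally show ?thesis .
      qed
    qed
    also have "\<dots> \<le> u n s" using Suc by simp
    finally show ?case .
  qed
  have "measure_pmf.prob (hist d s p1 p2 n) {h. set h \<subseteq> F}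
      = measure_pmf.expectation (hist d s p1 p2 n) (\<lambda>h. if h \<in> {h. set h \<subseteq> F} then 1 else 0)"
    by (rule prob_exp)
  also have "\<dots> = measure_pmf.expectation (hist d s p1 p2 n) (phi (n - n))"
    unfolding exp_fin[OF hist_fin]
  proof (intro sum.cong refl)
    fix h assume "h \<in> set_pmf (hist d s p1 p2 n)"
    then have "h \<noteq> []" using hist_len by fastforce
    then have "last h \<in> set h" by simp
    then show "pmf (hist d s p1 p2 n) h * (if h \<in> {h. set h \<subseteq> F} then 1 else 0)
        = pmf (hist d s p1 p2 n) h * phi (n - n) h"
      by (auto simp: phi_def)
  qed
  also have "\<dots> \<le> u n s" using claim[of n] by simp
  finally have pr: "measure_pmf.prob (hist d s p1 p2 n) {h. set h \<subseteq> F} \<le> u n s" .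
  have "(INF p2\<in>{p. strategy G2 p}. prSafe d F s p1 p2) \<le> prSafe d F s p1 p2"
  proof (rule cINF_lower)
    show "bdd_below ((\<lambda>p2. prSafe d F s p1 p2) ` {p. strategy G2 p})"
      by (rule bdd_belowI[of _ 0]) (auto simp: prSafe_nonneg)
  qed (use p2s in simp)
  also have "\<dots> \<le> u n s" using prSafe_le[of d F s p1 p2 n] pr by simp
  finally show ?thesis .
qed

lemma val_le_w: "val1Safe G1 G2 d F s \<le> w s"
  unfolding val1Safe_def
proof (rule cSUP_least[OF G1_strats])
  fix p1 assume "p1 \<in> {p. strategy G1 p}"
  then show "(INF p2\<in>{p. strategy G2 p}. prSafe d F s p1 p2) \<le> w s"
    unfolding w_def using val_le_u by (intro cINF_greatest) auto
qed

definition xs :: "'s \<Rightarrow> real^'m" where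
  "xs s = (SOME x. x \<in> Dl s \<and> (s \<in> F \<longrightarrow> (\<forall>b\<in>G2 s. w s \<le> Ev x s b w)))"

lemma xs: "xs s \<in> Dl s" "s \<in> F \<Longrightarrow> b \<in> G2 s \<Longrightarrow> w s \<le> Ev (xs s) s b w"
proof -
  have "\<exists>x. x \<in> Dl s \<and> (s \<in> F \<longrightarrow> (\<forall>b\<in>G2 s. w s \<le> Ev x s b w))"
  proof (cases "s \<in> F")
    case True then show ?thesis using local_opt by blast
  next
    case False then show ?thesis using Dl_ne by blast
  qed
  then have "xs s \<in> Dl s \<and> (s \<in> F \<longrightarrow> (\<forall>b\<in>G2 s. w s \<le> Ev (xs s) s b w))"
    unfolding xs_def by (rule someI_ex)
  then show "xs s \<in> Dl s" "s \<in> F \<Longrightarrow> b \<in> G2 s \<Longrightarrow> w s \<le> Ev (xs s) s b w" by auto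
qed

lemma xs0: "0 \<le> xs s $ a" and xs1: "(\<Sum>a\<in>UNIV. xs s $ a) = 1"
  using xs(1)[of s] by (auto simp: Dl_def)

definition mm :: "'s \<Rightarrow> 'm \<Rightarrow> 'm \<Rightarrow> real" where
  "mm s a b = (\<Sum>t\<in>UNIV. pmf (d s a b) t * w t)"
definition sq :: "'s \<Rightarrow> 'm \<Rightarrow> 'm \<Rightarrow> real" where
  "sq s a b = (\<Sum>t\<in>UNIV. pmf (d s a b) t * (w t)^2)"

lemma mm_bounds: "0 \<le> mm s a b" "mm s a b \<le> 1"
  unfolding mm_def using inner_bounds[of w, OF w_bounds(1) w_bounds(2)] by auto

lemma sq_ge: "(mm s a b)^2 \<le> sq s a b"
proof -
  have "sq s a b = (mm s a b)^2 + (\<Sum>t\<in>UNIV. pmf (d s a b) t * (w t - mm s a b)^2)"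
    unfolding sq_def mm_def by (rule var_id) (auto simp: sum_pmf_UNIV)
  moreover have "0 \<le> (\<Sum>t\<in>UNIV. pmf (d s a b) t * (w t - mm s a b)^2)"
    by (intro sum_nonneg) auto
  ultimately show ?thesis by linarith
qed

definition Pc :: "'s \<Rightarrow> 'm \<Rightarrow> real \<Rightarrow> bool" where
  "Pc s b c \<longleftrightarrow> (\<forall>a a'. 0 < xs s $ a \<longrightarrow> 0 < xs s $ a' \<longrightarrow> mm s a b = mm s a' b) \<or>
     (\<exists>a1 a2. a1 \<noteq> a2 \<and> 0 < xs s $ a1 \<and> 0 < xs s $ a2 \<and> c \<le> xs s $ a1 * xs s $ a2 * (mm s a1 b - mm s a2 b)^2 / 4)"

lemma Pc_ex: "\<exists>c>0. Pc s b c"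
proof (cases "\<forall>a a'. 0 < xs s $ a \<longrightarrow> 0 < xs s $ a' \<longrightarrow> mm s a b = mm s a' b")
  case True
  then have "Pc s b 1" unfolding Pc_def by (rule disjI1)
  then show ?thesis by (intro exI[of _ 1]) simp
next
  case False
  then obtain a1 a2 where h: "0 < xs s $ a1" "0 < xs s $ a2" "mm s a1 b \<noteq> mm s a2 b" by blast
  then have ne: "a1 \<noteq> a2" by auto
  define c where "c = xs s $ a1 * xs s $ a2 * (mm s a1 b - mm s a2 b)^2 / 4"
  have cpos: "0 < c" unfolding c_def using h by simp
  have "a1 \<noteq> a2 \<and> 0 < xs s $ a1 \<and> 0 < xs s $ a2 \<and> c \<le> xs s $ a1 * xs s $ a2 * (mm s a1 b - mm s a2 b)^2 / 4"
    using ne h unfolding c_def by simp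
  then have "\<exists>a1 a2. a1 \<noteq> a2 \<and> 0 < xs s $ a1 \<and> 0 < xs s $ a2 \<and> c \<le> xs s $ a1 * xs s $ a2 * (mm s a1 b - mm s a2 b)^2 / 4"
    by blast
  then have "Pc s b c" unfolding Pc_def by (rule disjI2)
  then show ?thesis using cpos by blast
qed

lemma Pc_mono: assumes h: "Pc s b c" "c' \<le> c" shows "Pc s b c'"
proof -
  have "\<forall>x. c \<le> x \<longrightarrow> c' \<le> x" using h(2) by auto
  then show ?thesis using h(1) unfolding Pc_def by blast
qed

lemma c0_ex: "\<exists>c>0. \<forall>s b. Pc s b c"
proof -
  have "\<forall>sb. \<exists>c. c > 0 \<and> Pc (fst sb) (snd sb) c" using Pc_ex by blast
  then have "\<exists>cf. \<forall>sb. cf sb > 0 \<and> Pc (fst sb) (snd sb) (cf sb)" by (rule choice)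
  then obtain cf where cf: "\<And>sb. cf sb > 0 \<and> Pc (fst sb) (snd sb) (cf sb)" by blast
  define c where "c = Min (range cf)"
  have "c > 0" unfolding c_def using cf by (subst Min_gr_iff) auto
  moreover have "Pc s b c" for s b
  proof -
    have "c \<le> cf (s,b)" unfolding c_def by (rule Min_le) auto
    moreover have "Pc s b (cf (s,b))" using cf[of "(s,b)"] by simp
    ultimately show ?thesis using Pc_mono by blast
  qed
  ultimately show ?thesis by blast
qed

definition rr :: "nat \<Rightarrow> 's \<Rightarrow> 'm \<Rightarrow> nat" where
  "rr N s a = (if 0 < xs s $ a then nat \<lceil>real N * xs s $ a\<rceil> else 0)"
definition JJ :: "nat \<Rightarrow> 's \<Rightarrow> nat" where
  "JJ N s = (\<Sum>a\<in>UNIV. rr N s a)"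
definition qq :: "nat \<Rightarrow> 's \<Rightarrow> 'm \<Rightarrow> real" where
  "qq N s a = real (rr N s a) / real (JJ N s)"

lemma round_inst:
  assumes "CARD('m) \<le> N"
  shows "N \<le> JJ N s" "JJ N s \<le> N + CARD('m)" "rr N s a \<le> JJ N s" "rr N s a \<noteq> 0 \<longleftrightarrow> 0 < xs s $ a"
    "\<bar>xs s $ a - qq N s a\<bar> \<le> real CARD('m) / real N" "xs s $ a / 2 \<le> qq N s a"
proof -
  note R = round[of "\<lambda>a. xs s $ a", OF xs0 xs1 assms]
  show "N \<le> JJ N s" unfolding JJ_def rr_def by (fact R(1))
  show "JJ N s \<le> N + CARD('m)" unfolding JJ_def rr_def by (fact R(2))
  show "rr N s a \<le> JJ N s" unfolding JJ_def rr_def by (fact R(3))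
  show "rr N s a \<noteq> 0 \<longleftrightarrow> 0 < xs s $ a" unfolding rr_def by (fact R(4))
  show "\<bar>xs s $ a - qq N s a\<bar> \<le> real CARD('m) / real N" unfolding qq_def JJ_def rr_def by (fact R(5))
  show "xs s $ a / 2 \<le> qq N s a" unfolding qq_def JJ_def rr_def by (fact R(6))
qed

lemma qq_props:
  assumes "CARD('m) \<le> N"
  shows "0 \<le> qq N s a" "(\<Sum>a\<in>UNIV. qq N s a) = 1"
proof -
  show "0 \<le> qq N s a" unfolding qq_def by simp
  have M1: "1 \<le> CARD('m)" by (simp add: Suc_leI)
  have "0 < JJ N s" using round_inst(1)[OF assms, of s] assms M1 by linarith
  then show "(\<Sum>a\<in>UNIV. qq N s a) = 1"
    unfolding qq_def sum_divide_distrib[symmetric] of_nat_sum[symmetric] JJ_def[symmetric] by simp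
qed

definition xi :: "nat \<Rightarrow> 's \<Rightarrow> 'm pmf" where
  "xi N s = embed_pmf (qq N s)"

lemma pmf_xi: assumes N: "CARD('m) \<le> N" shows "pmf (xi N s) a = qq N s a"
  unfolding xi_def by (rule embed_fin[OF qq_props(1)[OF N] qq_props(2)[OF N]])

lemma step_b:
  fixes \<alpha> c :: real
  assumes N: "CARD('m) \<le> N" and c: "\<forall>s b. Pc s b c" and al: "0 \<le> \<alpha>"
    and Nc: "real CARD('m) * (real CARD('m) / real N) * (1 + 2 * \<alpha>) \<le> \<alpha> * c"
    and sF: "s \<in> F" and b: "b \<in> G2 s"
  shows "w s + \<alpha> * (w s)^2 \<le> (\<Sum>a\<in>UNIV. qq N s a * (mm s a b + \<alpha> * sq s a b))"
proof (rule key[where x="\<lambda>a. xs s $ a" and e="real CARD('m) * (real CARD('m) / real N)" and c=c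
    and q="qq N s" and m="\<lambda>a. mm s a b" and sq="\<lambda>a. sq s a b" and y="w s" and \<alpha>=\<alpha>])
  show "0 \<le> xs s $ a" for a by (rule xs0)
  show "(\<Sum>a\<in>UNIV. xs s $ a) = 1" by (rule xs1)
  show "0 \<le> qq N s a" for a using qq_props[OF N] by simp
  show "(\<Sum>a\<in>UNIV. qq N s a) = 1" using qq_props[OF N] by simp
  show "qq N s a \<noteq> 0 \<Longrightarrow> 0 < xs s $ a" for a
    using round_inst(4)[OF N, of s a] by (auto simp: qq_def)
  show "0 \<le> mm s a b" "mm s a b \<le> 1" for a using mm_bounds by auto
  show "(mm s a b)^2 \<le> sq s a b" for a by (rule sq_ge)
  show "0 \<le> w s" by (rule w_bounds)
  show "w s \<le> (\<Sum>a\<in>UNIV. xs s $ a * mm s a b)"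
    using xs(2)[OF sF b] by (simp add: Ev_def mm_def)
  show "(\<Sum>a\<in>UNIV. \<bar>xs s $ a - qq N s a\<bar>) \<le> real CARD('m) * (real CARD('m) / real N)"
  proof -
    have "(\<Sum>a\<in>UNIV. \<bar>xs s $ a - qq N s a\<bar>) \<le> (\<Sum>a\<in>(UNIV::'m set). real CARD('m) / real N)"
      using round_inst(5)[OF N] by (intro sum_mono) auto
    then show ?thesis by simp
  qed
  show "0 \<le> \<alpha>" by (rule al)
  show "real CARD('m) * (real CARD('m) / real N) + 2 * \<alpha> * (real CARD('m) * (real CARD('m) / real N)) \<le> \<alpha> * c"
  proof -
    have "\<forall>e::real. e + 2 * \<alpha> * e = e * (1 + 2 * \<alpha>)" by (simp add: algebra_simps)
    then show ?thesis using Nc by metis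
  qed
  show "(\<forall>a a'. 0 < xs s $ a \<longrightarrow> 0 < xs s $ a' \<longrightarrow> mm s a b = mm s a' b) \<or>
    (\<exists>a1 a2. a1 \<noteq> a2 \<and> c \<le> qq N s a1 * qq N s a2 * (mm s a1 b - mm s a2 b)^2)"
  proof -
    have "Pc s b c" using c by blast
    then show ?thesis unfolding Pc_def
    proof (elim disjE exE conjE)
      fix a1 a2 assume h: "a1 \<noteq> a2" "0 < xs s $ a1" "0 < xs s $ a2"
        "c \<le> xs s $ a1 * xs s $ a2 * (mm s a1 b - mm s a2 b)^2 / 4"
      have "xs s $ a1 * xs s $ a2 / 4 \<le> qq N s a1 * qq N s a2"
      proof -
        have "(xs s $ a1 / 2) * (xs s $ a2 / 2) \<le> qq N s a1 * qq N s a2"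
          using round_inst(6)[OF N, of s a1] round_inst(6)[OF N, of s a2] h
          by (intro mult_mono) auto
        then show ?thesis by simp
      qed
      then have "xs s $ a1 * xs s $ a2 / 4 * (mm s a1 b - mm s a2 b)^2 \<le> qq N s a1 * qq N s a2 * (mm s a1 b - mm s a2 b)^2"
        by (intro mult_right_mono) auto
      moreover have "xs s $ a1 * xs s $ a2 * (mm s a1 b - mm s a2 b)^2 / 4
          = xs s $ a1 * xs s $ a2 / 4 * (mm s a1 b - mm s a2 b)^2" by simp
      ultimately have "c \<le> qq N s a1 * qq N s a2 * (mm s a1 b - mm s a2 b)^2" using h(4) by linarith
      then show ?thesis using h(1) by blast
    next
      assume "\<forall>a a'. 0 < xs s $ a \<longrightarrow> 0 < xs s $ a' \<longrightarrow> mm s a b = mm s a' b"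
      then show ?thesis by blast
    qed
  qed
qed

lemma Kx_nonneg:
  assumes "\<And>h. 0 \<le> f h"
  shows "0 \<le> Kx d p1 p2 h f"
  unfolding Kx_def using assms by (intro sum_nonneg mult_nonneg_nonneg) auto

lemma guar:
  fixes \<alpha> c :: real
  assumes N: "CARD('m) \<le> N" and c: "\<forall>s b. Pc s b c" and al: "0 \<le> \<alpha>"
    and Nc: "real CARD('m) * (real CARD('m) / real N) * (1 + 2 * \<alpha>) \<le> \<alpha> * c"
    and p2: "strategy G2 p2"
  shows "w s - \<alpha> \<le> measure_pmf.prob (hist d s (memoryless (xi N)) p2 n) {h. set h \<subseteq> F}"
proof -
  define g where "g t = w t + \<alpha> * (w t)^2" for t
  define Z where "Z h = (if set h \<subseteq> F then g (last h) else 0)" for h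
  let ?p1 = "memoryless (xi N)"
  have g0: "0 \<le> g t" for t unfolding g_def using w_bounds[of t] al by simp
  have gF: "t \<notin> F \<Longrightarrow> g t = 0" for t unfolding g_def using w_notF by simp
  have g1: "g t \<le> 1 + \<alpha>" for t
  proof -
    have "(w t)^2 \<le> 1" using w_bounds[of t] by (simp add: power_le_one)
    then have "\<alpha> * (w t)^2 \<le> \<alpha>" using al by (simp add: mult_left_le)
    then show ?thesis unfolding g_def using w_bounds[of t] by linarith
  qed
  have Z0: "0 \<le> Z h" for h unfolding Z_def using g0 by simp
  have claim: "g s \<le> measure_pmf.expectation (hist d s ?p1 p2 n) Z"
  proof (induction n)
    case 0
    show ?case using gF[of s] by (auto simp: Z_def)
  next
    case (Suc n)
    have "measure_pmf.expectation (hist d s ?p1 p2 n) Z \<le> measure_pmf.expectation (hist d s ?p1 p2 (Suc n)) Z"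
    proof (rule hist_step_ge)
      fix h assume h: "h \<in> set_pmf (hist d s ?p1 p2 n)"
      then have hne: "h \<noteq> []" using hist_len by fastforce
      show "Z h \<le> Kx d ?p1 p2 h Z"
      proof (cases "set h \<subseteq> F")
        case False
        then show ?thesis using Kx_nonneg[of Z, OF Z0] by (simp add: Z_def)
      next
        case True
        define s' where "s' = last h"
        have sF: "s' \<in> F" using True hne unfolding s'_def by auto
        have Zt: "Z (h @ [t]) = g t" for t using True gF[of t] by (auto simp: Z_def)
        have inner: "(\<Sum>t\<in>UNIV. pmf (d s' a b) t * g t) = mm s' a b + \<alpha> * sq s' a b" for a b
          unfolding g_def mm_def sq_def by (simp add: algebra_simps sum.distrib sum_distrib_left)
        have "Kx d ?p1 p2 h Z = (\<Sum>a\<in>UNIV. qq N s' a * (\<Sum>b\<in>UNIV. pmf (p2 h) b * (mm s' a b + \<alpha> * sq s' a b)))"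
          unfolding Kx_def Zt inner memoryless_def s'_def[symmetric] pmf_xi[OF N] ..
        also have "\<dots> = (\<Sum>a\<in>UNIV. \<Sum>b\<in>UNIV. pmf (p2 h) b * (qq N s' a * (mm s' a b + \<alpha> * sq s' a b)))"
          by (simp add: sum_distrib_left mult_ac)
        also have "\<dots> = (\<Sum>b\<in>UNIV. \<Sum>a\<in>UNIV. pmf (p2 h) b * (qq N s' a * (mm s' a b + \<alpha> * sq s' a b)))"
          by (rule sum.swap)
        also have "\<dots> = (\<Sum>b\<in>UNIV. pmf (p2 h) b * (\<Sum>a\<in>UNIV. qq N s' a * (mm s' a b + \<alpha> * sq s' a b)))"
          by (simp add: sum_distrib_left)
        also have "\<dots> \<ge> (\<Sum>b\<in>UNIV. pmf (p2 h) b * g s')"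
        proof (intro sum_mono)
          fix b
          show "pmf (p2 h) b * g s' \<le> pmf (p2 h) b * (\<Sum>a\<in>UNIV. qq N s' a * (mm s' a b + \<alpha> * sq s' a b))"
          proof (cases "pmf (p2 h) b = 0")
            case True then show ?thesis by simp
          next
            case False
            then have "b \<in> set_pmf (p2 h)" by (simp add: set_pmf_iff)
            then have "b \<in> G2 s'" using p2 hne unfolding strategy_def s'_def by blast
            then have "g s' \<le> (\<Sum>a\<in>UNIV. qq N s' a * (mm s' a b + \<alpha> * sq s' a b))"
              unfolding g_def by (rule step_b[OF N c al Nc sF])
            then show ?thesis by (intro mult_left_mono) auto
          qed
        qed
        finally have "(\<Sum>b\<in>UNIV. pmf (p2 h) b * g s') \<le> Kx d ?p1 p2 h Z" .
        moreover have "(\<Sum>b\<in>UNIV. pmf (p2 h) b * g s') = g s'"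
          by (simp add: sum_distrib_right[symmetric] sum_pmf_UNIV)
        moreover have "Z h = g s'" using True by (simp add: Z_def s'_def)
        ultimately show ?thesis by simp
      qed
    qed
    then show ?case using Suc by linarith
  qed
  define P where "P = measure_pmf.prob (hist d s ?p1 p2 n) {h. set h \<subseteq> F}"
  have P1: "P \<le> 1" unfolding P_def by simp
  have "measure_pmf.expectation (hist d s ?p1 p2 n) Z
      \<le> measure_pmf.expectation (hist d s ?p1 p2 n) (\<lambda>h. (1 + \<alpha>) * (if h \<in> {h. set h \<subseteq> F} then 1 else 0))"
    unfolding exp_fin[OF hist_fin]
  proof (intro sum_mono mult_left_mono)
    fix h show "Z h \<le> (1 + \<alpha>) * (if h \<in> {h. set h \<subseteq> F} then 1 else 0)"
      using g1 by (simp add: Z_def)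
  qed simp
  also have "\<dots> = (1 + \<alpha>) * P" unfolding P_def prob_exp by simp
  finally have "g s \<le> (1 + \<alpha>) * P" using claim by linarith
  moreover have "w s \<le> g s" unfolding g_def using al by simp
  ultimately have "w s \<le> P + \<alpha> * P" by (simp add: algebra_simps)
  moreover have "\<alpha> * P \<le> \<alpha>" using P1 al by (simp add: mult_left_le)
  ultimately show ?thesis unfolding P_def by linarith
qed

lemma main:
  fixes \<epsilon> :: real
  assumes eps: "\<epsilon> > 0"
  shows "\<exists>k::nat. k > 0 \<and> (\<exists>xi. selector G1 xi \<and> k_uniform G1 G2 d F k xi \<and>
           (\<forall>s. (INF p2\<in>{p. strategy G2 p}. prSafe d F s (memoryless xi) p2)
                  \<ge> val1Safe G1 G2 d F s - \<epsilon>))"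
proof -
  obtain c where c0: "c > 0" and c: "\<forall>s b. Pc s b c" using c0_ex by blast
  define M where "M = CARD('m)"
  have M1: "1 \<le> M" unfolding M_def by (simp add: Suc_leI)
  define X where "X = real M * real M * (1 + 2 * \<epsilon>) / (\<epsilon> * c)"
  define N where "N = max M (nat \<lceil>X\<rceil>)"
  have NM: "CARD('m) \<le> N" unfolding N_def M_def by simp
  have N1: "1 \<le> N" using NM M1 unfolding M_def by linarith
  have "X \<le> real N" unfolding N_def by (simp add: of_nat_max) linarith
  then have "real M * real M * (1 + 2 * \<epsilon>) \<le> \<epsilon> * c * real N"
    unfolding X_def using eps c0 by (simp add: pos_divide_le_eq mult_ac)
  then have Nc: "real CARD('m) * (real CARD('m) / real N) * (1 + 2 * \<epsilon>) \<le> \<epsilon> * c"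
    using N1 unfolding M_def by (simp add: field_simps)
  define k where "k = N + M"
  have "k > 0" unfolding k_def using N1 by simp
  moreover have "selector G1 (xi N)"
    unfolding selector_def
  proof (intro allI subsetI)
    fix s a assume "a \<in> set_pmf (xi N s)"
    then have "qq N s a \<noteq> 0" using pmf_xi[OF NM] by (simp add: set_pmf_iff)
    then have "rr N s a \<noteq> 0" unfolding qq_def by auto
    then have "0 < xs s $ a" using round_inst(4)[OF NM] by blast
    then show "a \<in> G1 s" using xs(1)[of s] unfolding Dl_def by force
  qed
  moreover have "k_uniform G1 G2 d F k (xi N)"
    unfolding k_uniform_def
  proof (intro allI impI ballI)
    fix s a
    have "pmf (xi N s) a = real (rr N s a) / real (JJ N s)" using pmf_xi[OF NM] by (simp add: qq_def)
    moreover have "rr N s a \<le> JJ N s" "JJ N s \<le> k"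
      using round_inst(2,3)[OF NM, of s] unfolding k_def M_def by auto
    ultimately show "\<exists>i j. i \<le> j \<and> j \<le> k \<and> pmf (xi N s) a = real i / real j" by blast
  qed
  moreover have "\<forall>s. (INF p2\<in>{p. strategy G2 p}. prSafe d F s (memoryless (xi N)) p2)
                  \<ge> val1Safe G1 G2 d F s - \<epsilon>"
  proof
    fix s
    have "w s - \<epsilon> \<le> (INF p2\<in>{p. strategy G2 p}. prSafe d F s (memoryless (xi N)) p2)"
    proof (rule cINF_greatest[OF G2_strats])
      fix p2 assume "p2 \<in> {p. strategy G2 p}"
      then have p2: "strategy G2 p2" by simp
      show "w s - \<epsilon> \<le> prSafe d F s (memoryless (xi N)) p2"
        unfolding prSafe_def
        by (rule cINF_greatest) (auto intro: guar[OF NM c _ Nc p2] simp: less_imp_le[OF eps])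
    qed
    then show "(INF p2\<in>{p. strategy G2 p}. prSafe d F s (memoryless (xi N)) p2) \<ge> val1Safe G1 G2 d F s - \<epsilon>"
      using val_le_w[of s] by linarith
  qed
  ultimately show ?thesis by blast
qed

end

theorem lemma15:
  fixes G1 G2 :: "'s::finite \<Rightarrow> 'm::finite set"
    and d :: "'s \<Rightarrow> 'm \<Rightarrow> 'm \<Rightarrow> 's pmf"
    and F :: "'s set" and \<epsilon> :: real
  assumes "cgs G1 G2" and "\<epsilon> > 0"
  shows "\<exists>k::nat. k > 0 \<and> (\<exists>xi. selector G1 xi \<and> k_uniform G1 G2 d F k xi \<and>
           (\<forall>s. (INF p2\<in>{p. strategy G2 p}. prSafe d F s (memoryless xi) p2)
                  \<ge> val1Safe G1 G2 d F s - \<epsilon>))"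
proof -
  interpret game G1 G2 d F by unfold_locales (rule assms(1))
  show ?thesis by (rule main[OF assms(2)])
qed

end
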